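(* Let $k$ be a positive even integer. There exist positive constants $N_0,C_k,A_k$ such that for all $N>N_0$ and all $t=e^z$ on the minor arc $C''_N$ we have \[ |F_k(t)|<C_k\,N^{A_k}. \]
   Context: Let $M_0(t,q)=\prod_{m\geq1}\prod_{j=0}^{m-1}\frac{1}{1-q^{2j+1-m}t^m}$, let $\partial=q\frac{d}{dq}$, and define $M_k(t)=\partial^k M_0(t,q)\big|_{q=1}$. Let $M(t)=\prod_{m\geq1}(1-t^m)^{-m}$ be MacMahon's function, and define $F_k(t)$ by $M_k(t)=F_k(t)\cdot M(t)$ (for $|t|<1$). For $N>0$, $C_N$ is the circle $|t|=e^{-1/N}$; writing $t=e^z$ with $\operatorname{Re}z=-1/N$ and $\operatorname{Im}z\in(-\pi,\pi]$, the major arc $C'_N$ consists of the points with $|\operatorname{Im}z|<1/N$, and the minor arc $C''_N$ is $C_N\setminus C'_N$. *)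

theory Defs
  imports "HOL-Analysis.Analysis"
begin

definition M0 :: "complex \<Rightarrow> complex \<Rightarrow> complex" where
  "M0 t q = (\<Prod>n. (let m = Suc n in
      \<Prod>j<m. inverse (1 - q powi (2 * int j + 1 - int m) * t ^ m)))"

definition qdq :: "(complex \<Rightarrow> complex) \<Rightarrow> complex \<Rightarrow> complex" where
  "qdq f = (\<lambda>q. q * deriv f q)"

definition Mk :: "nat \<Rightarrow> complex \<Rightarrow> complex" where
  "Mk k t = (qdq ^^ k) (M0 t) 1"

definition MacMahon :: "complex \<Rightarrow> complex" where
  "MacMahon t = (\<Prod>n. inverse ((1 - t ^ Suc n) ^ Suc n))"

definition Fk :: "nat \<Rightarrow> complex \<Rightarrow> complex" where
  "Fk k t = Mk k t / MacMahon t"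

text \<open>Minor arc C''_N, parametrised by z with t = exp z.\<close>
definition minor_arc_z :: "real \<Rightarrow> complex set" where
  "minor_arc_z N = {z. Re z = - 1 / N \<and> - pi < Im z \<and> Im z \<le> pi \<and> \<not> (\<bar>Im z\<bar> < 1 / N)}"

end

theory Submission
  imports Defs "HOL-Complex_Analysis.Complex_Analysis"
begin


lemma exp_powi: "exp (w::complex) powi s = exp (of_int s * w)"
proof (cases "s \<ge> 0")
  case True
  then obtain n where "s = int n" by (metis nonneg_int_cases)
  thus ?thesis by (simp add: exp_of_nat_mult power_int_def)
next
  case False
  then obtain n where "s = - int n" by (metis neg_int_cases not_le less_imp_le)
  thus ?thesis by (simp add: exp_of_nat_mult power_int_def exp_minus power_inverse)
qed

lemma norm_exp_nat_minus1:
  fixes v :: complex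
  shows "norm (exp (of_nat n * v) - 1) \<le> of_nat n * norm (exp v - 1) * exp (of_nat n * norm v)"
proof (induction n)
  case 0 then show ?case by simp
next
  case (Suc n)
  have e: "exp (of_nat (Suc n) * v) - 1 = exp (of_nat n * v) * (exp v - 1) + (exp (of_nat n * v) - 1)"
    by (simp add: distrib_right exp_add algebra_simps)
  have "norm (exp (of_nat n * v)) \<le> exp (of_nat n * norm v)"
    using norm_exp[of "of_nat n * v"] by (simp add: norm_mult)
  also have "\<dots> \<le> exp (of_nat (Suc n) * norm v)" by (auto intro!: mult_right_mono)
  finally have a: "norm (exp (of_nat n * v)) \<le> exp (of_nat (Suc n) * norm v)" .
  have b: "exp (of_nat n * norm v) \<le> exp (of_nat (Suc n) * norm v)" by (auto intro!: mult_right_mono)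
  have "norm (exp (of_nat (Suc n) * v) - 1) \<le> norm (exp (of_nat n * v)) * norm (exp v - 1) + norm (exp (of_nat n * v) - 1)"
    unfolding e by (metis norm_mult norm_triangle_ineq)
  also have "\<dots> \<le> exp (of_nat (Suc n) * norm v) * norm (exp v - 1) + of_nat n * norm (exp v - 1) * exp (of_nat (Suc n) * norm v)"
    apply (intro add_mono mult_right_mono a order.trans[OF Suc.IH]) 
    using b by (auto intro!: mult_left_mono)
  also have "\<dots> = of_nat (Suc n) * norm (exp v - 1) * exp (of_nat (Suc n) * norm v)"
    by (simp add: algebra_simps)
  finally show ?case .
qed

lemma norm_exp_int_minus1:
  fixes v :: complex
  assumes "norm v \<le> 1/2"
  shows "norm (exp (of_int s * v) - 1) \<le> 3/2 * \<bar>of_int s\<bar> * norm v * exp (\<bar>of_int s\<bar> * norm v)"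
proof -
  obtain n where n: "s = int n \<or> s = - int n" by (metis int_cases2)
  define v' where "v' = (if s = int n then v else -v)"
  have nv: "norm v' = norm v" by (simp add: v'_def)
  have sv: "of_int s * v = of_nat n * v'" using n by (auto simp: v'_def)
  have abs: "\<bar>real_of_int s\<bar> = of_nat n" using n by auto
  have "norm (exp v' - 1) \<le> 3/2 * norm v'" using norm_exp_bounds(2)[of v'] assms nv by simp
  hence "norm (exp (of_nat n * v') - 1) \<le> of_nat n * (3/2 * norm v') * exp (of_nat n * norm v')"
    using norm_exp_nat_minus1[of n v'] by (meson exp_ge_zero mult_left_mono mult_right_mono of_nat_0_le_iff order_trans)
  thus ?thesis using sv abs nv by (simp add: algebra_simps)
qed

lemma one_minus_exp_neg: "0 \<le> (x::real) \<Longrightarrow> x \<le> 1 \<Longrightarrow> x/2 \<le> 1 - exp (-x)"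
proof -
  assume x: "0 \<le> x" "x \<le> 1"
  have "1 + x \<le> exp x" by simp
  hence "exp (-x) \<le> 1 / (1 + x)" using x by (simp add: exp_minus field_simps)
  also have "\<dots> \<le> 1 - x/2"
  proof -
    have xx: "x*x \<le> x" using x mult_right_le_one_le[of x x] by simp
    have "(1 - x/2)*(1+x) = 1 + x/2 - x*x/2" by (simp add: field_simps)
    hence "1 \<le> (1 - x/2)*(1+x)" using xx x by linarith
    thus ?thesis using x by (simp add: pos_divide_le_eq)
  qed
  finally show ?thesis by simp
qed

lemma exp_minus1_le: "0 \<le> (x::real) \<Longrightarrow> exp x - 1 \<le> x * exp x"
proof -
  assume x: "0 \<le> x"
  have "1 + (-x) \<le> exp (-x)" by (rule exp_ge_add_one_self)
  hence "(1 - x) * exp x \<le> exp (-x) * exp x" by (intro mult_right_mono) auto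
  also have "\<dots> = 1" by (simp add: exp_minus)
  finally show ?thesis by (simp add: algebra_simps)
qed

lemma sq_exp_bound:
  assumes a: "0 < (a::real)"
  shows "(real m)^2 * exp (-a*m/2) \<le> 64/a^2 * exp (-a*m/4)"
proof -
  have "a*m/8 \<le> exp (a*m/8)" using exp_ge_add_one_self[of "a*m/8"] by linarith
  hence "(a*m/8)^2 \<le> exp (a*m/8)^2" using a by (intro power_mono) auto
  also have "exp (a*m/8)^2 = exp (a*m/4)" by (simp add: power2_eq_square exp_add[symmetric])
  finally have "(real m)^2 \<le> 64/a^2 * exp (a*m/4)" using a by (simp add: field_simps power2_eq_square)
  hence "(real m)^2 * exp (-a*m/2) \<le> 64/a^2 * (exp (a*m/4) * exp (-a*m/2))" unfolding mult.assoc[symmetric] by (intro mult_right_mono) auto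
  also have "exp (a*m/4) * exp (-a*m/2) = exp (-a*m/4)" by (simp add: exp_add[symmetric])
  finally show ?thesis .
qed

lemma lin_exp_bound:
  assumes a: "0 < (a::real)"
  shows "real m * exp (-a*m) \<le> 2/a * exp (-a*m/2)"
proof -
  have "a*m/2 \<le> exp (a*m/2)" using exp_ge_add_one_self[of "a*m/2"] by linarith
  hence "real m \<le> 2/a * exp (a*m/2)" using a by (simp add: field_simps)
  hence "real m * exp (-a*m) \<le> 2/a * (exp (a*m/2) * exp (-a*m))" unfolding mult.assoc[symmetric] by (intro mult_right_mono) auto
  also have "exp (a*m/2) * exp (-a*m) = exp (-a*m/2)" by (simp add: exp_add[symmetric])
  finally show ?thesis .
qed

lemma bridge:
  fixes f :: "complex \<Rightarrow> complex"
  assumes hol: "f holomorphic_on S" and S: "open S" and U: "open U" and sub: "\<And>w. w \<in> U \<Longrightarrow> exp w \<in> S"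
  shows "(qdq ^^ k) f holomorphic_on S \<and> (\<forall>w\<in>U. (deriv ^^ k) (\<lambda>w. f (exp w)) w = (qdq ^^ k) f (exp w))"
proof (induction k)
  case 0 show ?case using hol by simp
next
  case (Suc k)
  define h where "h = (qdq ^^ k) f"
  have h: "h holomorphic_on S" and eq: "\<forall>w\<in>U. (deriv ^^ k) (\<lambda>w. f (exp w)) w = h (exp w)"
    using Suc by (auto simp: h_def)
  have e1: "(qdq ^^ Suc k) f = (\<lambda>q. q * deriv h q)" by (simp add: qdq_def h_def)
  have "(\<lambda>q. q * deriv h q) holomorphic_on S" using h S by (intro holomorphic_intros holomorphic_deriv)
  moreover have "\<forall>w\<in>U. (deriv ^^ Suc k) (\<lambda>w. f (exp w)) w = exp w * deriv h (exp w)"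
  proof
    fix w assume w: "w \<in> U"
    have ev: "eventually (\<lambda>x. (deriv ^^ k) (\<lambda>w. f (exp w)) x = (h \<circ> exp) x) (nhds w)"
      using eventually_nhds_in_open[OF U w] by eventually_elim (use eq in auto)
    have "(deriv ^^ Suc k) (\<lambda>w. f (exp w)) w = deriv ((deriv ^^ k) (\<lambda>w. f (exp w))) w" by simp
    also have "\<dots> = deriv (h \<circ> exp) w" by (rule deriv_cong_ev[OF ev refl])
    also have "\<dots> = deriv h (exp w) * deriv exp w"
      by (rule deriv_chain) (auto intro: holomorphic_on_imp_differentiable_at[OF h S sub[OF w]] field_differentiable_within_exp)
    also have "deriv exp w = exp w" by (rule DERIV_imp_deriv) (rule DERIV_exp)
    finally show "(deriv ^^ Suc k) (\<lambda>w. f (exp w)) w = exp w * deriv h (exp w)" by simp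
  qed
  ultimately show ?case unfolding e1 by simp
qed

lemma u_bound:
  fixes t w :: complex and a :: real and m :: nat and s :: int
  assumes a: "0 < a" "a \<le> 1/2" and t: "norm t = exp (-a)" and w: "norm w \<le> a/2"
    and m: "m \<ge> 1" and s: "\<bar>s\<bar> \<le> int m"
  shows "1 - exp (of_int s * w) * t^m \<noteq> 0"
    and "norm ((1 - t^m) * inverse (1 - exp (of_int s * w) * t^m) - 1) \<le> (6/a) * m * norm w * exp (-a*m/2)"
proof -
  have sm: "\<bar>real_of_int s\<bar> \<le> real m" using s by linarith
  have w12: "norm w \<le> 1/2" using w a by linarith
  have sw: "\<bar>real_of_int s\<bar> * norm w \<le> real m * (a/2)" using sm w by (intro mult_mono) auto
  have e1: "norm (exp (of_int s * w)) \<le> exp (a*m/2)"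
  proof -
    have "norm (exp (of_int s * w)) \<le> exp (norm (of_int s * w))" by (rule norm_exp)
    also have "norm (of_int s * w) = \<bar>real_of_int s\<bar> * norm w" by (simp add: norm_mult)
    finally show ?thesis using sw by (smt (verit, best) exp_le_cancel_iff mult.commute times_divide_eq_left)
  qed
  have tm: "norm (t^m) = exp (-a*m)" using t by (simp add: norm_power exp_of_nat_mult[symmetric] mult.commute)
  define y where "y = exp (of_int s * w) * t^m"
  have ny: "norm y \<le> exp (-a*m/2)"
  proof -
    have "norm y \<le> exp (a*m/2) * exp (-a*m)" unfolding y_def norm_mult tm by (intro mult_right_mono e1) auto
    also have "\<dots> = exp (-a*m/2)" by (simp add: exp_add[symmetric])
    finally show ?thesis .
  qed
  have "a * 1 \<le> a * real m" by (intro mult_left_mono) (use a m in auto)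
  hence "exp (-a*m/2) \<le> exp (-(a/2))" by simp
  hence ny2: "norm y \<le> exp (-(a/2))" using ny by linarith
  have lb: "a/4 \<le> 1 - exp (-(a/2))" using one_minus_exp_neg[of "a/2"] a by simp
  have d: "a/4 \<le> norm (1 - y)"
  proof -
    have "1 - norm y \<le> norm (1 - y)" using norm_triangle_ineq2[of 1 y] by simp
    thus ?thesis using lb ny2 by linarith
  qed
  hence nz: "1 - y \<noteq> 0" using a by auto
  thus "1 - exp (of_int s * w) * t^m \<noteq> 0" by (simp add: y_def)
  have id: "(1 - t^m) * inverse (1 - y) - 1 = t^m * (exp (of_int s * w) - 1) / (1 - y)"
    using nz by (simp add: y_def field_simps)
  have ne: "norm (exp (of_int s * w) - 1) \<le> 3/2 * real m * norm w * exp (a*m/2)"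
  proof -
    have "norm (exp (of_int s * w) - 1) \<le> 3/2 * \<bar>of_int s\<bar> * norm w * exp (\<bar>of_int s\<bar> * norm w)"
      by (rule norm_exp_int_minus1[OF w12])
    also have "\<dots> \<le> 3/2 * real m * norm w * exp (a*m/2)"
      using sm sw by (intro mult_mono) (auto simp: field_simps)
    finally show ?thesis .
  qed
  have "norm ((1 - t^m) * inverse (1 - y) - 1) = exp (-a*m) * norm (exp (of_int s * w) - 1) / norm (1 - y)"
    unfolding id by (simp add: norm_mult norm_divide tm)
  also have "\<dots> \<le> exp (-a*m) * (3/2 * real m * norm w * exp (a*m/2)) / (a/4)"
    using d ne a by (intro divide_mono mult_left_mono) auto
  also have "\<dots> = (6/a) * m * norm w * (exp (-a*m) * exp (a*m/2))" using a by (simp add: field_simps)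
  also have "exp (-a*m) * exp (a*m/2) = exp (-a*m/2)" by (simp add: exp_add[symmetric])
  finally show "norm ((1 - t^m) * inverse (1 - exp (of_int s * w) * t^m) - 1) \<le> (6/a) * m * norm w * exp (-a*m/2)"
    by (simp add: y_def)
qed



definition rf :: "complex \<Rightarrow> complex \<Rightarrow> nat \<Rightarrow> nat \<Rightarrow> complex" where
  "rf t w n j = (1 - t^Suc n) * inverse (1 - exp (of_int (2 * int j + 1 - int (Suc n)) * w) * t^Suc n)"

definition Rf :: "complex \<Rightarrow> complex \<Rightarrow> nat \<Rightarrow> complex" where
  "Rf t w n = (\<Prod>j<Suc n. rf t w n j)"

lemma s_abs: "j < Suc n \<Longrightarrow> \<bar>2 * int j + 1 - int (Suc n)\<bar> \<le> int (Suc n)"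
  by arith

lemma a4_le: assumes "0 < (a::real)" "a \<le> 1/2" shows "a^4 \<le> a/2"
proof -
  have h: "a*a \<le> 1/2*(1/2)" using mult_mono[of a "1/2" a "1/2"] assms by simp
  have "a*a*a \<le> 1/2*(1/2)*(1/2)" using mult_mono[OF h, of a "1/2"] assms by simp
  hence "a*a*a \<le> 1/2" by simp
  hence "a * (a*a*a) \<le> a * (1/2)" using assms by (intro mult_left_mono) auto
  thus ?thesis by (simp add: power_numeral_reduce power3_eq_cube mult.assoc)
qed

lemma denom_nz:
  fixes t w :: complex and a :: real
  assumes a: "0 < a" "a \<le> 1/2" and t: "norm t = exp (-a)" and w: "norm w \<le> a^4" and j: "j < Suc n"
  shows "1 - exp (of_int (2 * int j + 1 - int (Suc n)) * w) * t^Suc n \<noteq> 0"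
proof -
  have "norm w \<le> a/2" using w a4_le[OF a] by linarith
  thus ?thesis using u_bound(1)[of a t w "Suc n" "2 * int j + 1 - int (Suc n)"] a t s_abs[OF j] by simp
qed

lemma Rf_bound:
  fixes t w :: complex and a :: real
  assumes a: "0 < a" "a \<le> 1/2" and t: "norm t = exp (-a)" and w: "norm w \<le> a^4"
  shows "norm (Rf t w n - 1) \<le> exp 192 * (384 * a * exp (-a/4) ^ Suc n)"
proof -
  define m where "m = Suc n"
  define b where "b = (6/a) * m * norm w * exp (-a*m/2)"
  have wa: "norm w \<le> a/2" using w a4_le[OF a] by linarith
  have bj: "norm (rf t w n j - 1) \<le> b" if "j < Suc n" for j
    using u_bound(2)[OF a t wa _ s_abs[OF that]] unfolding rf_def b_def m_def by simp
  have b0: "0 \<le> b" unfolding b_def using a by simp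
  have "norm (Rf t w n - 1) = norm ((\<Prod>j<Suc n. 1 + (rf t w n j - 1)) - 1)" by (simp add: Rf_def)
  also have "\<dots> \<le> (\<Prod>j<Suc n. 1 + norm (rf t w n j - 1)) - 1" by (rule norm_prod_minus1_le_prod_minus1)
  also have "(\<Prod>j<Suc n. 1 + norm (rf t w n j - 1)) \<le> exp (\<Sum>j<Suc n. norm (rf t w n j - 1))"
    by (rule prod_le_exp_sum) auto
  also have "(\<Sum>j<Suc n. norm (rf t w n j - 1)) \<le> (\<Sum>j<Suc n. b)" by (intro sum_mono bj) auto
  also have "(\<Sum>j<Suc n. b) = m * b" by (simp add: m_def)
  finally have 1: "norm (Rf t w n - 1) \<le> exp (m*b) - 1" by simp
  have mb0: "0 \<le> m * b" using b0 by simp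
  have "m * b = (6/a) * norm w * ((real m)^2 * exp (-a*m/2))" by (simp add: b_def power2_eq_square)
  also have "\<dots> \<le> (6/a) * a^4 * (64/a^2 * exp (-a*m/4))"
    using a w by (intro mult_mono sq_exp_bound) auto
  also have "\<dots> = 384 * a * exp (-a*m/4)" using a by (simp add: field_simps power_numeral_reduce)
  finally have mb: "m * b \<le> 384 * a * exp (-a*m/4)" .
  have "exp (-a*m/4) \<le> 1" using a by simp
  hence "384 * a * exp (-a*m/4) \<le> 384 * (1/2) * 1" using a by (intro mult_mono) auto
  hence mb2: "m * b \<le> 192" using mb by linarith
  have "exp (m*b) - 1 \<le> m*b * exp (m*b)" by (rule exp_minus1_le[OF mb0])
  also have "\<dots> \<le> 384 * a * exp (-a*m/4) * exp 192" by (rule mult_mono[OF mb]) (use mb2 mb0 a in auto)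
  also have "exp (-a*m/4) = exp (-a/4) ^ Suc n"
  proof -
    have "exp (-a/4) ^ Suc n = exp (of_nat (Suc n) * (-a/4))" by (rule exp_of_nat_mult[symmetric])
    also have "of_nat (Suc n) * (-a/4) = -a*m/4" by (simp add: m_def field_simps)
    finally show ?thesis by simp
  qed
  finally show ?thesis using 1 by (simp add: algebra_simps)
qed

lemma Q_conv:
  fixes t :: complex and a :: real
  assumes a: "0 < a" and t: "norm t = exp (-a)"
  shows "convergent_prod (\<lambda>n. inverse ((1 - t^Suc n)^Suc n))"
proof -
  have "summable (\<lambda>n. norm ((1 - t^Suc n)^Suc n - 1))"
  proof (rule summable_comparison_test')
    show "summable (\<lambda>n. 2/a * exp (2/a) * exp (-a/2) ^ Suc n)"
      by (intro summable_mult summable_ignore_initial_segment[where k=1, simplified]) (use a in \<open>auto intro!: summable_geometric\<close>)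
  next
    fix n :: nat
    define m where "m = Suc n"
    have tm: "norm (t^m) = exp (-a*m)" using t by (simp add: norm_power exp_of_nat_mult[symmetric] mult.commute)
    define x where "x = real m * exp (-a*m)"
    have x0: "0 \<le> x" by (simp add: x_def)
    have xb: "x \<le> 2/a * exp (-a*m/2)" unfolding x_def by (rule lin_exp_bound[OF a])
    have "exp (-a*m/2) \<le> 1" using a by simp
    hence xb2: "x \<le> 2/a" using xb a by (smt (verit) divide_pos_pos mult_left_le)
    define v where "v = - (t^m)"
    have "norm ((1 - t^m)^m - 1) = norm ((\<Prod>j<m. 1 + v) - 1)" by (simp add: v_def)
    also have "\<dots> \<le> (\<Prod>j<m. 1 + norm v) - 1" by (rule norm_prod_minus1_le_prod_minus1)
    also have "(\<Prod>j<m. 1 + norm v) \<le> exp (\<Sum>j<m. norm v)" by (rule prod_le_exp_sum) auto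
    also have "(\<Sum>j<m. norm v) = x" by (simp add: x_def tm v_def)
    also have "exp x - 1 \<le> x * exp x" by (rule exp_minus1_le[OF x0])
    also have "\<dots> \<le> (2/a * exp (-a*m/2)) * exp (2/a)" by (rule mult_mono[OF xb]) (use xb2 x0 a in auto)
    also have "exp (-a*m/2) = exp (-a/2) ^ Suc n"
    proof -
      have "exp (-a/2) ^ Suc n = exp (of_nat (Suc n) * (-a/2))" by (rule exp_of_nat_mult[symmetric])
      also have "of_nat (Suc n) * (-a/2) = -a*m/2" by (simp add: m_def field_simps)
      finally show ?thesis by simp
    qed
    finally show "norm (norm ((1 - t^Suc n)^Suc n - 1)) \<le> 2/a * exp (2/a) * exp (-a/2) ^ Suc n"
      by (simp add: m_def algebra_simps)
  qed
  hence "convergent_prod (\<lambda>n. (1 - t^Suc n)^Suc n)"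
    by (intro abs_convergent_prod_imp_convergent_prod summable_imp_abs_convergent_prod)
  thus ?thesis by (simp only: convergent_prod_inverse_iff)
qed



lemma main_analytic:
  fixes t :: complex and a :: real
  assumes a: "0 < a" "a \<le> 1/2" and t: "norm t = exp (-a)"
  shows "\<exists>l. continuous_on (cball 0 (a^4)) l \<and> l holomorphic_on ball 0 (a^4) \<and>
     (\<forall>w\<in>cball 0 (a^4). norm (l w) \<le> exp (exp 192 * 3072) \<and> M0 t (exp w) = l w * MacMahon t)"
proof -
  define \<rho> where "\<rho> = a^4"
  define g where "g = exp (-a/4)"
  define \<gamma> where "\<gamma> n = exp 192 * (384 * a * g ^ Suc n)" for n
  have g0: "0 < g" "g < 1" using a by (auto simp: g_def)
  have s\<gamma>: "summable \<gamma>" unfolding \<gamma>_def using g0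
    by (intro summable_mult summable_ignore_initial_segment[where k=1, simplified] summable_geometric) auto
  have \<gamma>0: "0 \<le> \<gamma> n" for n using a g0 by (simp add: \<gamma>_def)
  have \<gamma>sum: "suminf \<gamma> \<le> exp 192 * 3072"
  proof -
    have "(\<lambda>n. g^n) sums (1/(1-g))" using geometric_sums[of g] g0 by simp
    hence "(\<lambda>n. exp 192 * (384*a*g) * g^n) sums (exp 192 * (384*a*g) * (1/(1-g)))" by (rule sums_mult)
    moreover have "(\<lambda>n. exp 192 * (384*a*g) * g^n) = \<gamma>" by (auto simp: \<gamma>_def algebra_simps fun_eq_iff)
    ultimately have "suminf \<gamma> = exp 192 * (384*a*g/(1-g))" by (simp add: sums_iff)
    also have "384*a*g/(1-g) \<le> 3072"
    proof -
      have "a/8 \<le> 1 - g" using one_minus_exp_neg[of "a/4"] a by (simp add: g_def)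
      moreover have "a*g \<le> a" using a g0 by simp
      ultimately have "384*(a*g) \<le> 3072 * (1 - g)"
        using mult_left_mono[of "a*g" a 384] by simp
      hence "384*a*g \<le> 3072 * (1 - g)" by (simp add: mult.assoc)
      thus ?thesis using g0 by (simp add: pos_divide_le_eq)
    qed
    hence "exp 192 * (384*a*g/(1-g)) \<le> exp 192 * 3072" by (rule mult_left_mono) simp
    finally show ?thesis .
  qed
  have inball: "norm w \<le> a^4" if "w \<in> cball 0 \<rho>" for w using that by (simp add: \<rho>_def)
  have bound: "norm (Rf t w n - 1) \<le> \<gamma> n" if "w \<in> cball 0 \<rho>" for w n
    using Rf_bound[OF a t inball[OF that]] by (simp add: \<gamma>_def g_def)
  have nz: "1 - exp (of_int (2 * int j + 1 - int (Suc n)) * w) * t^Suc n \<noteq> 0"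
    if "w \<in> cball 0 \<rho>" "j < Suc n" for w n j
    using denom_nz[OF a t inball[OF that(1)] that(2)] .
  have cont: "continuous_on (cball 0 \<rho>) (\<lambda>w. Rf t w n)" for n
    unfolding Rf_def
  proof (rule continuous_on_prod[where f="\<lambda>j w. rf t w n j"])
    fix j assume j: "j \<in> {..<Suc n}"
    hence j': "j < Suc n" by simp
    show "continuous_on (cball 0 \<rho>) (\<lambda>w. rf t w n j)" unfolding rf_def
      by (intro continuous_intros) (use nz j' in blast)
  qed
  have hol: "(\<lambda>w. Rf t w n) holomorphic_on ball 0 \<rho>" for n
    unfolding Rf_def
  proof (rule holomorphic_on_prod[where f="\<lambda>j w. rf t w n j"])
    fix j assume j: "j \<in> {..<Suc n}"
    hence j': "j < Suc n" by simp
    have nz': "1 - exp (of_int (2 * int j + 1 - int (Suc n)) * w) * t^Suc n \<noteq> 0" if "w \<in> ball 0 \<rho>" for w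
      using nz[OF _ j', of w] that by auto
    show "(\<lambda>w. rf t w n j) holomorphic_on ball 0 \<rho>" unfolding rf_def
      by (intro holomorphic_intros) (use nz' in blast)
  qed
  have ucs: "uniformly_convergent_on (cball 0 \<rho>) (\<lambda>N w. \<Sum>n<N. norm (Rf t w n - 1))"
    unfolding uniformly_convergent_on_def
    using Weierstrass_m_test[of "cball 0 \<rho>" "\<lambda>n w. norm (Rf t w n - 1)" \<gamma>] bound s\<gamma> by auto
  have ucp: "uniformly_convergent_on (cball 0 \<rho>) (\<lambda>N w. \<Prod>n<N. Rf t w n)"
    by (rule uniformly_convergent_on_prod'[OF cont _ ucs]) auto
  then obtain l where ul: "uniform_limit (cball 0 \<rho>) (\<lambda>N w. \<Prod>n<N. Rf t w n) l sequentially"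
    unfolding uniformly_convergent_on_def by blast
  have ev: "eventually (\<lambda>N. continuous_on (cball 0 \<rho>) (\<lambda>w. \<Prod>n<N. Rf t w n) \<and>
              (\<lambda>w. \<Prod>n<N. Rf t w n) holomorphic_on ball 0 \<rho>) sequentially"
  proof (intro always_eventually allI conjI)
    fix N
    show "continuous_on (cball 0 \<rho>) (\<lambda>w. \<Prod>n<N. Rf t w n)"
      by (rule continuous_on_prod[where f="\<lambda>n w. Rf t w n"]) (rule cont)
    show "(\<lambda>w. \<Prod>n<N. Rf t w n) holomorphic_on ball 0 \<rho>"
      by (rule holomorphic_on_prod[where f="\<lambda>n w. Rf t w n"]) (rule hol)
  qed
  obtain hc: "continuous_on (cball 0 \<rho>) l" and hh: "l holomorphic_on ball 0 \<rho>"
    by (rule holomorphic_uniform_limit[OF ev ul]) simp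
  have Qc: "convergent_prod (\<lambda>n. inverse ((1 - t^Suc n)^Suc n))" by (rule Q_conv[OF a(1) t])
  have pw: "norm (l w) \<le> exp (exp 192 * 3072) \<and> M0 t (exp w) = l w * MacMahon t" if w: "w \<in> cball 0 \<rho>" for w
  proof
    have "summable (\<lambda>n. norm (Rf t w n - 1))"
      by (rule summable_comparison_test'[OF s\<gamma>]) (use bound[OF w] in simp)
    hence cp: "convergent_prod (Rf t w)"
      by (intro abs_convergent_prod_imp_convergent_prod summable_imp_abs_convergent_prod)
    have lim1: "(\<lambda>N. \<Prod>n<N. Rf t w n) \<longlonglongrightarrow> l w" by (rule tendsto_uniform_limitI[OF ul w])
    have "(\<lambda>N. \<Prod>n<Suc N. Rf t w n) \<longlonglongrightarrow> prodinf (Rf t w)"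
      using convergent_prod_LIMSEQ[OF cp] by (simp add: lessThan_Suc_atMost)
    hence "(\<lambda>N. \<Prod>n<N. Rf t w n) \<longlonglongrightarrow> prodinf (Rf t w)"
      by (rule LIMSEQ_imp_Suc[of "\<lambda>N. \<Prod>n<N. Rf t w n"])
    hence lw: "l w = prodinf (Rf t w)" using lim1 LIMSEQ_unique by blast
    have pb: "norm (\<Prod>n<N. Rf t w n) \<le> exp (exp 192 * 3072)" for N
    proof -
      have "norm (\<Prod>n<N. Rf t w n) = (\<Prod>n<N. norm (Rf t w n))" by (simp add: prod_norm)
      also have "\<dots> \<le> (\<Prod>n<N. 1 + norm (Rf t w n - 1))"
      proof (intro prod_mono conjI)
        fix n
        have "norm (Rf t w n) = norm (1 + (Rf t w n - 1))" by simp
        also have "\<dots> \<le> norm (1::complex) + norm (Rf t w n - 1)" by (rule norm_triangle_ineq)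
        finally show "norm (Rf t w n) \<le> 1 + norm (Rf t w n - 1)" by simp
      qed auto
      also have "\<dots> \<le> exp (\<Sum>n<N. norm (Rf t w n - 1))" by (rule prod_le_exp_sum) auto
      also have "(\<Sum>n<N. norm (Rf t w n - 1)) \<le> (\<Sum>n<N. \<gamma> n)" by (intro sum_mono bound[OF w])
      also have "(\<Sum>n<N. \<gamma> n) \<le> suminf \<gamma>" by (rule sum_le_suminf[OF s\<gamma>]) (auto intro: \<gamma>0)
      also note \<gamma>sum
      finally show ?thesis by simp
    qed
    show "norm (l w) \<le> exp (exp 192 * 3072)"
      by (rule LIMSEQ_le_const2[OF tendsto_norm[OF lim1]]) (use pb in auto)
    have fe: "(\<lambda>n. let m = Suc n in \<Prod>j<m. inverse (1 - exp w powi (2 * int j + 1 - int m) * t ^ m))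
        = (\<lambda>n. Rf t w n * inverse ((1 - t^Suc n)^Suc n))"
    proof (rule ext)
      fix n
      define c where "c = 1 - t^Suc n"
      have "norm t < 1" using t a by simp
      hence "norm t ^ Suc n < 1" by (metis power_less_one_iff norm_ge_zero zero_less_Suc)
      hence "norm (t^Suc n) < 1" by (simp only: norm_power)
      hence "c \<noteq> 0" unfolding c_def by auto
      hence cm: "c^Suc n \<noteq> 0" by simp
      define P where "P = (\<Prod>j<Suc n. inverse (1 - exp (of_int (2 * int j + 1 - int (Suc n))*w) * t^Suc n))"
      have "Rf t w n = (\<Prod>j<Suc n. c) * P" unfolding Rf_def rf_def P_def c_def by (rule prod.distrib)
      hence R: "Rf t w n = c^Suc n * P" by simp
      have "Rf t w n * inverse ((1 - t^Suc n)^Suc n) = c^Suc n * P * inverse (c^Suc n)"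
        unfolding R c_def ..
      also have "\<dots> = P * (c^Suc n * inverse (c^Suc n))" by (simp only: mult_ac)
      also have "c^Suc n * inverse (c^Suc n) = 1" by (rule right_inverse[OF cm])
      finally have "Rf t w n * inverse ((1 - t^Suc n)^Suc n) = P" by simp
      moreover have "(let m = Suc n in \<Prod>j<m. inverse (1 - exp w powi (2 * int j + 1 - int m) * t ^ m)) = P"
        unfolding Let_def P_def exp_powi ..
      ultimately show "(let m = Suc n in \<Prod>j<m. inverse (1 - exp w powi (2 * int j + 1 - int m) * t ^ m))
        = Rf t w n * inverse ((1 - t^Suc n)^Suc n)" by simp
    qed
    have "M0 t (exp w) = (\<Prod>n. Rf t w n * inverse ((1 - t^Suc n)^Suc n))"
      unfolding M0_def fe ..
    also have "\<dots> = prodinf (Rf t w) * MacMahon t"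
      unfolding MacMahon_def by (rule prodinf_mult[OF cp Qc, symmetric])
    finally show "M0 t (exp w) = l w * MacMahon t" using lw by simp
  qed
  show ?thesis using hc hh pw unfolding \<rho>_def by blast
qed



lemma ball11_nonpos: "q \<in> ball (1::complex) 1 \<Longrightarrow> q \<notin> \<real>\<^sub>\<le>\<^sub>0"
proof
  assume q: "q \<in> ball 1 1" and n: "q \<in> \<real>\<^sub>\<le>\<^sub>0"
  have "Re q \<le> 0" using n by (simp add: complex_nonpos_Reals_iff)
  moreover have "\<bar>Re (1 - q)\<bar> \<le> cmod (1 - q)" by (rule abs_Re_le_cmod)
  moreover have "cmod (1 - q) < 1" using q by (simp add: dist_norm)
  ultimately show False by simp
qed

theorem lemma4:
  fixes k :: nat
  assumes "k > 0" and "even k"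
  shows "\<exists>N0 C A. N0 > 0 \<and> C > 0 \<and> A > 0 \<and>
           (\<forall>N::real. N > N0 \<longrightarrow> (\<forall>z \<in> minor_arc_z N.
              cmod (Fk k (exp z)) < C * N powr A))"
proof -
  define E :: real where "E = exp (exp 192 * 3072)"
  have E0: "0 < E" by (simp add: E_def)
  define C where "C = 2 * E * fact k + 1"
  have C0: "0 < C" using E0 by (simp add: C_def add_pos_pos)
  have main: "\<forall>N::real. N > 2 \<longrightarrow> (\<forall>z\<in>minor_arc_z N. cmod (Fk k (exp z)) < C * N powr real (4*k))"
  proof (intro allI impI ballI)
    fix N :: real and z assume N: "N > 2" and z: "z \<in> minor_arc_z N"
    define a where "a = 1/N"
    have a: "0 < a" "a \<le> 1/2" using N by (auto simp: a_def field_simps)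
    define t where "t = exp z"
    have t: "norm t = exp (-a)" using z by (simp add: t_def minor_arc_z_def a_def)
    define \<rho> where "\<rho> = a^4"
    have \<rho>0: "0 < \<rho>" using a by (simp add: \<rho>_def)
    obtain l where hc: "continuous_on (cball 0 \<rho>) l" and hh: "l holomorphic_on ball 0 \<rho>"
      and pw: "\<And>w. w \<in> cball 0 \<rho> \<Longrightarrow> norm (l w) \<le> E \<and> M0 t (exp w) = l w * MacMahon t"
      using main_analytic[OF a t] unfolding \<rho>_def E_def by blast
    define M where "M = MacMahon t"
    have pos: "0 < N ^ (4*k)" using N by simp
    have "N powr real (4*k) = N ^ (4*k)" by (rule powr_realpow) (use N in simp)
    hence rhs: "C * N powr real (4*k) = C * N ^ (4*k)" by simp
    show "cmod (Fk k (exp z)) < C * N powr real (4*k)"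
    proof (cases "M = 0")
      case True
      thus ?thesis unfolding rhs Fk_def using C0 pos by (simp add: M_def t_def)
    next
      case False
      define S where "S = ball 1 1 \<inter> Ln -` ball 0 \<rho>"
      have openS: "open S" unfolding S_def
        by (rule continuous_open_preimage) (auto intro!: continuous_on_Ln dest: ball11_nonpos)
      have S_sub: "q \<in> ball 1 1" "Ln q \<in> ball 0 \<rho>" if "q \<in> S" for q using that by (auto simp: S_def)
      have holL: "(\<lambda>q. l (Ln q) * M) holomorphic_on S"
      proof -
        have "Ln holomorphic_on S" by (rule holomorphic_on_Ln) (auto dest: S_sub ball11_nonpos)
        hence "(l \<circ> Ln) holomorphic_on S" by (rule holomorphic_on_compose_gen[OF _ hh]) (auto dest: S_sub)
        thus ?thesis by (auto intro!: holomorphic_intros simp: o_def)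
      qed
      have holf: "M0 t holomorphic_on S"
      proof (rule holomorphic_transform[OF holL])
        fix q assume q: "q \<in> S"
        have "q \<noteq> 0" using S_sub(1)[OF q] by auto
        hence "M0 t q = M0 t (exp (Ln q))" by simp
        also have "\<dots> = l (Ln q) * M" using pw[of "Ln q"] S_sub(2)[OF q] by (auto simp: M_def)
        finally show "l (Ln q) * M = M0 t q" by simp
      qed
      define U where "U = ball 0 \<rho> \<inter> exp -` S"
      have openU: "open U" unfolding U_def
        by (rule continuous_open_preimage) (auto intro!: continuous_intros openS)
      have U0: "0 \<in> U" using \<rho>0 by (simp add: U_def S_def)
      have br: "(deriv ^^ k) (\<lambda>w. M0 t (exp w)) 0 = (qdq ^^ k) (M0 t) (exp 0)"
        using bridge[OF holf openS openU, of k] U0 by (auto simp: U_def)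
      have "eventually (\<lambda>w. w \<in> ball 0 \<rho>) (nhds (0::complex))"
        by (rule eventually_nhds_in_open) (use \<rho>0 in auto)
      hence ev: "eventually (\<lambda>w. M0 t (exp w) = l w * M) (nhds 0)"
        by eventually_elim (use pw in \<open>auto simp: M_def\<close>)
      have cong: "(deriv ^^ k) (\<lambda>w. M0 t (exp w)) 0 = (deriv ^^ k) (\<lambda>w. l w * M) 0"
        by (rule higher_deriv_cong_ev[OF ev refl])
      have Mpos: "0 < cmod M" using False by simp
      have cb: "cmod ((deriv ^^ k) (\<lambda>w. l w * M) 0) \<le> fact k * (2 * E * cmod M) / \<rho>^k"
      proof (rule Cauchy_higher_deriv_bound)
        show "(\<lambda>w. l w * M) holomorphic_on ball 0 \<rho>" using hh by (intro holomorphic_intros)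
        show "continuous_on (cball 0 \<rho>) (\<lambda>w. l w * M)" using hc by (intro continuous_intros)
        show "0 < \<rho>" by (rule \<rho>0)
        show "0 < k" by (rule assms(1))
        fix w :: complex assume w: "w \<in> ball 0 \<rho>"
        have "norm (l w) \<le> E" using pw[of w] w by auto
        hence "norm (l w * M) \<le> E * cmod M" by (simp add: norm_mult mult_right_mono)
        also have "\<dots> < 2 * E * cmod M" using E0 Mpos by simp
        finally show "l w * M \<in> ball 0 (2 * E * cmod M)" by simp
      qed
      have Mk: "Mk k (exp z) = (deriv ^^ k) (\<lambda>w. l w * M) 0"
        using br cong by (simp add: Mk_def t_def)
      have rN: "\<rho>^k * N^(4*k) = 1"
      proof -
        have "\<rho>^k * N^(4*k) = (a * N)^(4*k)" by (simp add: \<rho>_def power_mult power_mult_distrib)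
        also have "a * N = 1" using N by (simp add: a_def)
        finally show ?thesis by simp
      qed
      have "cmod (Fk k (exp z)) = cmod ((deriv ^^ k) (\<lambda>w. l w * M) 0) / cmod M"
        by (simp add: Fk_def Mk norm_divide M_def t_def)
      also have "\<dots> \<le> fact k * (2 * E) / \<rho>^k"
      proof -
        have eq: "fact k * (2 * E * cmod M) / \<rho>^k = (fact k * (2 * E) / \<rho>^k) * cmod M"
          by (simp add: field_simps)
        have "cmod ((deriv ^^ k) (\<lambda>w. l w * M) 0) \<le> (fact k * (2 * E) / \<rho>^k) * cmod M"
          using cb unfolding eq .
        thus ?thesis using Mpos by (simp add: pos_divide_le_eq)
      qed
      also have "\<dots> = 2 * E * fact k * N^(4*k)"
      proof -
        have "\<rho>^k > 0" using \<rho>0 by simp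
        hence "1 / \<rho>^k = N^(4*k)" using rN \<rho>0 by (simp add: divide_eq_eq algebra_simps)
        have "fact k * (2 * E) / \<rho>^k = fact k * (2 * E) * (1 / \<rho>^k)" by simp
        also have "\<dots> = fact k * (2 * E) * N^(4*k)" unfolding \<open>1 / \<rho>^k = N^(4*k)\<close> ..
        also have "\<dots> = 2 * E * fact k * N^(4*k)" by (simp add: algebra_simps)
        finally show ?thesis .
      qed
      also have "\<dots> < C * N^(4*k)" using pos by (simp add: C_def algebra_simps)
      finally show ?thesis unfolding rhs .
    qed
  qed
  show ?thesis
    apply (rule exI[of _ "2::real"])
    apply (rule exI[of _ C])
    apply (rule exI[of _ "real (4*k)"])
    using main C0 assms(1) by auto
qed


end
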